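(* Let $m,n\ge1$. The set of monomials \[\Big\{\prod_{i,j}\eta_{ij}^{a_{ij}}\xi_{ij}^{b_{ij}}\ \Big|\ \text{for every } i:\ \big(\exists j \text{ with } a_{ij}>0 \text{ or } b_{ij}>0\big)\Rightarrow\big(a_{ik}>0\text{ for all }k\big)\Big\}\] (with $a_{ij},b_{ij}\in\mathbb{N}$) is an $\mathbb{R}$-basis of $R^m_n$.
   Context: $\eta_{ij},\xi_{ij}$ ($1\le i\le m$, $1\le j\le n$) are independent variables. $R^m_n$ is the set of polynomials $f\in\mathbb{R}[\eta_{ij},\xi_{ij}]$ such that for every $i\in\{1,\dots,m\}$ and every $k\in\{1,\dots,n\}$, the polynomial obtained from $f$ by substituting $\eta_{ik}=0$ does not depend on any of the variables $\xi_{ij}$ ($1\le j\le n$) or $\eta_{ij}$ ($j\ne k$). $R^m_n$ is a subring (in particular an $\mathbb{R}$-subspace) of the polynomial ring. *)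

theory Defs
  imports Complex_Main "HOL-Library.Poly_Mapping"
begin

datatype var = Eta nat nat | Xi nat nat

type_synonym mono = "var \<Rightarrow>\<^sub>0 nat"
type_synonym rpoly = "mono \<Rightarrow>\<^sub>0 real"

definition in_range :: "nat \<Rightarrow> nat \<Rightarrow> var \<Rightarrow> bool" where
  "in_range m n v = (case v of Eta i j \<Rightarrow> i \<in> {1..m} \<and> j \<in> {1..n}
                              | Xi i j \<Rightarrow> i \<in> {1..m} \<and> j \<in> {1..n})"

definition valid_mono :: "nat \<Rightarrow> nat \<Rightarrow> mono \<Rightarrow> bool" where
  "valid_mono m n \<mu> = (\<forall>v. Poly_Mapping.lookup \<mu> v > 0 \<longrightarrow> in_range m n v)"

definition poly_ring :: "nat \<Rightarrow> nat \<Rightarrow> rpoly set" where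
  "poly_ring m n = {p. \<forall>\<mu>\<in>Poly_Mapping.keys p. valid_mono m n \<mu>}"

lift_definition subst_zero :: "var \<Rightarrow> rpoly \<Rightarrow> rpoly" is
  "\<lambda>x p \<mu>. if Poly_Mapping.lookup \<mu> x = 0 then p \<mu> else 0"
  by (erule finite_subset[rotated]) auto

definition depends_on :: "rpoly \<Rightarrow> var \<Rightarrow> bool" where
  "depends_on p x = (\<exists>\<mu>\<in>Poly_Mapping.keys p. Poly_Mapping.lookup \<mu> x > 0)"

definition Rmn :: "nat \<Rightarrow> nat \<Rightarrow> rpoly set" where
  "Rmn m n = {f \<in> poly_ring m n. \<forall>i\<in>{1..m}. \<forall>k\<in>{1..n}.
      (\<forall>j\<in>{1..n}. \<not> depends_on (subst_zero (Eta i k) f) (Xi i j)) \<and>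
      (\<forall>j\<in>{1..n}. j \<noteq> k \<longrightarrow> \<not> depends_on (subst_zero (Eta i k) f) (Eta i j))}"

definition rscale :: "real \<Rightarrow> rpoly \<Rightarrow> rpoly" where
  "rscale c p = Poly_Mapping.map (\<lambda>a. c * a) p"

definition mono_poly :: "mono \<Rightarrow> rpoly" where
  "mono_poly \<mu> = Poly_Mapping.single \<mu> 1"

definition good_mono :: "nat \<Rightarrow> nat \<Rightarrow> mono \<Rightarrow> bool" where
  "good_mono m n \<mu> = (valid_mono m n \<mu> \<and>
     (\<forall>i\<in>{1..m}. (\<exists>j\<in>{1..n}. Poly_Mapping.lookup \<mu> (Eta i j) > 0 \<or> Poly_Mapping.lookup \<mu> (Xi i j) > 0)
        \<longrightarrow> (\<forall>k\<in>{1..n}. Poly_Mapping.lookup \<mu> (Eta i k) > 0)))"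

end

theory Submission
  imports Defs
begin

lemma lookup_rscale [simp]: "Poly_Mapping.lookup (rscale c p) k = c * Poly_Mapping.lookup p k"
  unfolding rscale_def by transfer (simp add: when_def)

lemma rscale_module: "module rscale"
  by standard (auto intro!: poly_mapping_eqI simp: lookup_add algebra_simps)

lemma lookup_subst_zero:
  "Poly_Mapping.lookup (subst_zero x p) \<mu> = (if Poly_Mapping.lookup \<mu> x = 0 then Poly_Mapping.lookup p \<mu> else 0)"
  by transfer simp

lemma depends_subst:
  "depends_on (subst_zero x f) y \<longleftrightarrow> (\<exists>\<mu>\<in>Poly_Mapping.keys f. Poly_Mapping.lookup \<mu> x = 0 \<and> Poly_Mapping.lookup \<mu> y > 0)"
  unfolding depends_on_def by (auto simp: in_keys_iff lookup_subst_zero split: if_splits)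

lemma Rmn_char: "f \<in> Rmn m n \<longleftrightarrow> (\<forall>\<mu>\<in>Poly_Mapping.keys f. good_mono m n \<mu>)"
proof
  assume f: "f \<in> Rmn m n"
  show "\<forall>\<mu>\<in>Poly_Mapping.keys f. good_mono m n \<mu>"
  proof
    fix \<mu> assume mu: "\<mu> \<in> Poly_Mapping.keys f"
    have v: "valid_mono m n \<mu>" using f mu unfolding Rmn_def poly_ring_def by auto
    have "\<forall>k\<in>{1..n}. Poly_Mapping.lookup \<mu> (Eta i k) > 0"
      if i: "i\<in>{1..m}" and j: "j\<in>{1..n}"
        and p: "Poly_Mapping.lookup \<mu> (Eta i j) > 0 \<or> Poly_Mapping.lookup \<mu> (Xi i j) > 0" for i j
    proof (rule ccontr)
      assume "\<not> ?thesis"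
      then obtain k where k: "k\<in>{1..n}" "Poly_Mapping.lookup \<mu> (Eta i k) = 0" by auto
      from f i k(1) have
        a: "\<forall>j\<in>{1..n}. \<not> depends_on (subst_zero (Eta i k) f) (Xi i j)" and
        b: "\<forall>j\<in>{1..n}. j \<noteq> k \<longrightarrow> \<not> depends_on (subst_zero (Eta i k) f) (Eta i j)"
        unfolding Rmn_def by auto
      show False
      proof (cases "Poly_Mapping.lookup \<mu> (Xi i j) > 0")
        case True
        then show ?thesis using a j mu k unfolding depends_subst by blast
      next
        case False
        then have "Poly_Mapping.lookup \<mu> (Eta i j) > 0" using p by auto
        moreover then have "j \<noteq> k" using k by auto
        ultimately show ?thesis using b j mu k unfolding depends_subst by blast
      qed
    qed
    then show "good_mono m n \<mu>" using v unfolding good_mono_def by blast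
  qed
next
  assume g: "\<forall>\<mu>\<in>Poly_Mapping.keys f. good_mono m n \<mu>"
  have pr: "f \<in> poly_ring m n" using g unfolding poly_ring_def good_mono_def by auto
  have "\<not> depends_on (subst_zero (Eta i k) f) y"
    if i: "i\<in>{1..m}" and k: "k\<in>{1..n}" and j: "j\<in>{1..n}" and y: "y = Xi i j \<or> (y = Eta i j \<and> j \<noteq> k)"
    for i k j y
  proof
    assume "depends_on (subst_zero (Eta i k) f) y"
    then obtain \<mu> where mu: "\<mu>\<in>Poly_Mapping.keys f" "Poly_Mapping.lookup \<mu> (Eta i k) = 0"
      "Poly_Mapping.lookup \<mu> y > 0" unfolding depends_subst by blast
    from g mu(1) have "good_mono m n \<mu>" by blast
    then show False using i k j y mu unfolding good_mono_def by fastforce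
  qed
  then show "f \<in> Rmn m n" using pr unfolding Rmn_def by blast
qed

lemma lookup_sum_monos:
  assumes "finite M"
  shows "Poly_Mapping.lookup (\<Sum>\<mu>\<in>M. rscale (u \<mu>) (mono_poly \<mu>)) \<nu> = (if \<nu> \<in> M then u \<nu> else 0)"
  using assms by (simp add: lookup_sum mono_poly_def lookup_single when_def if_distrib[of "\<lambda>z. u _ * z"] cong: if_cong)

lemma inj_mono_poly: "inj mono_poly"
proof (rule injI)
  fix a b assume "mono_poly a = mono_poly b"
  then have "Poly_Mapping.lookup (mono_poly a) a = Poly_Mapping.lookup (mono_poly b) a" by simp
  then show "a = b" by (simp add: mono_poly_def lookup_single when_def split: if_splits)
qed

theorem proposition2p6:
  fixes m n :: nat
  assumes "m \<ge> 1" and "n \<ge> 1"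
  shows "Modules.module.independent rscale (mono_poly ` {\<mu>. good_mono m n \<mu>})
       \<and> Modules.module.span rscale (mono_poly ` {\<mu>. good_mono m n \<mu>}) = Rmn m n"
proof -
  interpret M: module rscale by (rule rscale_module)
  let ?G = "{\<mu>. good_mono m n \<mu>}"
  have sumeq: "(\<Sum>v\<in>mono_poly ` S. rscale (u v) v) = (\<Sum>\<mu>\<in>S. rscale (u (mono_poly \<mu>)) (mono_poly \<mu>))" for S u
    by (rule sum.reindex_cong[where l=mono_poly]) (auto intro: inj_on_subset[OF inj_mono_poly])
  have ind: "M.independent (mono_poly ` ?G)"
    unfolding M.independent_explicit_module
  proof (intro allI impI)
    fix t u v
    assume h0: "finite t" "t \<subseteq> mono_poly ` ?G" "(\<Sum>v\<in>t. rscale (u v) v) = 0" "v \<in> t"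
    note h = h0
    then obtain S where S: "S \<subseteq> ?G" "t = mono_poly ` S" by (meson subset_imageE)
    have fS: "finite S" using h S finite_imageD inj_on_subset[OF inj_mono_poly] by (metis subset_UNIV)
    obtain \<nu> where nu: "\<nu> \<in> S" "v = mono_poly \<nu>" using h S by auto
    have "Poly_Mapping.lookup (\<Sum>\<mu>\<in>S. rscale (u (mono_poly \<mu>)) (mono_poly \<mu>)) \<nu> = 0"
      using h S sumeq by simp
    then show "u v = 0" using lookup_sum_monos[OF fS] nu by simp
  qed
  have "M.span (mono_poly ` ?G) = Rmn m n"
  proof
    show "M.span (mono_poly ` ?G) \<subseteq> Rmn m n"
    proof
      fix y assume "y \<in> M.span (mono_poly ` ?G)"
      then obtain t r where tr: "y = (\<Sum>a\<in>t. rscale (r a) a)" "finite t" "t \<subseteq> mono_poly ` ?G"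
        unfolding M.span_explicit by blast
      then obtain S where S: "S \<subseteq> ?G" "t = mono_poly ` S" by (meson subset_imageE)
      have fS: "finite S" using tr S finite_imageD inj_on_subset[OF inj_mono_poly] by (metis subset_UNIV)
      have "\<forall>\<mu>\<in>Poly_Mapping.keys y. good_mono m n \<mu>"
      proof
        fix \<mu> assume "\<mu> \<in> Poly_Mapping.keys y"
        then have "Poly_Mapping.lookup y \<mu> \<noteq> 0" by (simp add: in_keys_iff)
        then have "\<mu> \<in> S" using tr(1) S sumeq lookup_sum_monos[OF fS] by (auto split: if_splits)
        then show "good_mono m n \<mu>" using S by auto
      qed
      then show "y \<in> Rmn m n" by (simp add: Rmn_char)
    qed
  next
    show "Rmn m n \<subseteq> M.span (mono_poly ` ?G)"
    proof
      fix f assume "f \<in> Rmn m n"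
      then have g: "Poly_Mapping.keys f \<subseteq> ?G" by (auto simp: Rmn_char)
      have feq: "f = (\<Sum>\<mu>\<in>Poly_Mapping.keys f. rscale (Poly_Mapping.lookup f \<mu>) (mono_poly \<mu>))"
        by (rule poly_mapping_eqI) (simp add: lookup_sum_monos in_keys_iff)
      have "(\<Sum>\<mu>\<in>Poly_Mapping.keys f. rscale (Poly_Mapping.lookup f \<mu>) (mono_poly \<mu>)) \<in> M.span (mono_poly ` ?G)"
        using g by (intro M.span_sum M.span_scale M.span_base) auto
      then show "f \<in> M.span (mono_poly ` ?G)" using feq by simp
    qed
  qed
  with ind show ?thesis by simp
qed

end
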